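(* Let $\tilde\partial\in\mathcal D_{A,B,C}$ be a quasi-elementary differential, with associated sets $P,Q,R,X,Y,Z$, set $H$ and injection $h_+:H\to X$. Suppose $a\in A\setminus B$, $b\in B$, $b\prec a$ satisfy at least one of: (1) $(b,a)$ is a $C$-pair; (2) $b\in H$ and $a=h_+(b)$; (3) $a\in Y$, $b\in Q$, and $(\tilde\partial(b),\tilde\partial_{A\setminus B}(a))$ is a $C$-pair; (4) $a\in Z$, $b\in R$, and the elements $q\in Q$, $y\in Y$ with $\tilde\partial(q)=b$, $\tilde\partial_{A\setminus B}(y)=a$ form a $C$-pair $(q,y)$. Then $\langle\tilde\partial(a),b\rangle\ne0$.
   Context: $\mathbb E$ a field; $A=\{a_1\prec\dots\prec a_N\}$ a finite linearly ordered graded set; $\mathbb E(A)$ the graded vector space with basis $A$; $\langle a_i,a_j\rangle=\delta_{ij}$. An $M$-differential: degree $-1$, $\partial^2=0$, $\partial(a_i)\in\mathrm{span}\{a_1,\dots,a_{i-1}\}$. For $B\subset A$ with $\partial\mathbb E(B)\subset\mathbb E(B)$ it is an $M_{A,B}$-differential; $\partial_B$ = restriction, $\partial_{A\setminus B}$ = induced differential on $\mathbb E(A)/\mathbb E(B)\cong\mathbb E(A\setminus B)$. An element $a_k\in B$ is $\partial$-trivial if $k<N$, $a_{k+1}\in A\setminus B$ and $\langle\partial(a_{k+1}),a_k\rangle\neq0$. For $C\subset B$, $\mathcal D_{A,B,C}$ is the set of $M_{A,B}$-differentials for which all elements of $C$ are $\partial$-trivial. For $c\in C$, $c_+$ denotes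 the successor of $c$ in $A$ (it lies in $A\setminus B$); $(c,c_+)$ is called a $C$-pair. Elementary: each basis element maps to $0$ or a single basis element, no two to the same. For $\partial$ with $\partial_B,\partial_{A\setminus B}$ elementary: $Q=\{b\in B:\partial_Bb\ne0\}$, $R=\partial_B(Q)$, $P=B\setminus(Q\cup R)$, $Y=\{a\in A\setminus B:\partial_{A\setminus B}a\ne0\}$, $Z=\partial_{A\setminus B}(Y)$, $X$ the rest. Quasi-elementary: $\partial_B,\partial_{A\setminus B}$ elementary, each $\partial(x)$ ($x\in X$) has a nonzero coefficient on at most one element of $P$, that coefficient being $1$, and each element of $P$ has nonzero coefficient in at most one $\partial(x)$, $x\in X$. $H$ is the set of $\partial$-boundary homologically essential elements (for a quasi-elementary differential, equivalently the set of $p\in P$ appearing in some $\partial(x)$, $x\in X$), and $h_+(b)$ for $b\in H$ is the unique $x\in X$ with $\langle\partial(x),b\rangle\ne0$. *)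

theory Defs
  imports Main
begin

text \<open>An endomorphism of E(A) is encoded by its matrix of
  coefficients: d x y = <d(x), y>, the coefficient of the basis element y in d(x).\<close>

definition M_differential :: "'a::linorder set \<Rightarrow> ('a \<Rightarrow> int) \<Rightarrow> ('a \<Rightarrow> 'a \<Rightarrow> 'k::field) \<Rightarrow> bool" where
  "M_differential A deg d \<longleftrightarrow>
     (\<forall>x y. d x y \<noteq> 0 \<longrightarrow> x \<in> A \<and> y \<in> A) \<and>
     (\<forall>x y. d x y \<noteq> 0 \<longrightarrow> deg y = deg x - 1) \<and>
     (\<forall>x\<in>A. \<forall>z\<in>A. (\<Sum>y\<in>A. d x y * d y z) = 0) \<and>
     (\<forall>x y. d x y \<noteq> 0 \<longrightarrow> y < x)"

definition MAB_differential :: "'a::linorder set \<Rightarrow> 'a set \<Rightarrow> ('a \<Rightarrow> int) \<Rightarrow> ('a \<Rightarrow> 'a \<Rightarrow> 'k::field) \<Rightarrow> bool" where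
  "MAB_differential A B deg d \<longleftrightarrow> M_differential A deg d \<and> B \<subseteq> A \<and>
     (\<forall>x\<in>B. \<forall>y. d x y \<noteq> 0 \<longrightarrow> y \<in> B)"

definition succ_in :: "'a::linorder set \<Rightarrow> 'a \<Rightarrow> 'a" where
  "succ_in A c = (LEAST x. x \<in> A \<and> c < x)"

definition d_trivial :: "'a::linorder set \<Rightarrow> 'a set \<Rightarrow> ('a \<Rightarrow> 'a \<Rightarrow> 'k::field) \<Rightarrow> 'a \<Rightarrow> bool" where
  "d_trivial A B d c \<longleftrightarrow> c \<in> B \<and> (\<exists>x\<in>A. c < x) \<and> succ_in A c \<in> A - B \<and>
     d (succ_in A c) c \<noteq> 0"

definition D_ABC :: "'a::linorder set \<Rightarrow> 'a set \<Rightarrow> 'a set \<Rightarrow> ('a \<Rightarrow> int) \<Rightarrow> ('a \<Rightarrow> 'a \<Rightarrow> 'k::field) \<Rightarrow> bool" where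
  "D_ABC A B C deg d \<longleftrightarrow> C \<subseteq> B \<and> MAB_differential A B deg d \<and> (\<forall>c\<in>C. d_trivial A B d c)"

definition C_pair :: "'a::linorder set \<Rightarrow> 'a set \<Rightarrow> 'a \<Rightarrow> 'a \<Rightarrow> bool" where
  "C_pair A C c c' \<longleftrightarrow> c \<in> C \<and> c' = succ_in A c"

text \<open>The restriction of d to the basis S (for S = B: the restricted differential;
  for S = A - B: the induced differential on the quotient) is elementary.\<close>
definition elementary_on :: "'a set \<Rightarrow> ('a \<Rightarrow> 'a \<Rightarrow> 'k::field) \<Rightarrow> bool" where
  "elementary_on S d \<longleftrightarrow>
     (\<forall>x\<in>S. (\<forall>y\<in>S. d x y = 0) \<or> (\<exists>y\<in>S. d x y = 1 \<and> (\<forall>y'\<in>S. y' \<noteq> y \<longrightarrow> d x y' = 0))) \<and>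
     (\<forall>x1\<in>S. \<forall>x2\<in>S. \<forall>y\<in>S. d x1 y \<noteq> 0 \<longrightarrow> d x2 y \<noteq> 0 \<longrightarrow> x1 = x2)"

definition src_set :: "'a set \<Rightarrow> ('a \<Rightarrow> 'a \<Rightarrow> 'k::field) \<Rightarrow> 'a set" where
  "src_set S d = {x\<in>S. \<exists>y\<in>S. d x y \<noteq> 0}"

definition tgt_set :: "'a set \<Rightarrow> ('a \<Rightarrow> 'a \<Rightarrow> 'k::field) \<Rightarrow> 'a set" where
  "tgt_set S d = {y\<in>S. \<exists>x\<in>S. d x y \<noteq> 0}"

definition img_in :: "'a set \<Rightarrow> ('a \<Rightarrow> 'a \<Rightarrow> 'k::field) \<Rightarrow> 'a \<Rightarrow> 'a" where
  "img_in S d x = (THE y. y \<in> S \<and> d x y \<noteq> 0)"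

definition Qset where "Qset B d = src_set B d"
definition Rset where "Rset B d = tgt_set B d"
definition Pset where "Pset B d = B - (Qset B d \<union> Rset B d)"
definition Yset where "Yset A B d = src_set (A - B) d"
definition Zset where "Zset A B d = tgt_set (A - B) d"
definition Xset where "Xset A B d = (A - B) - (Yset A B d \<union> Zset A B d)"

definition quasi_elementary :: "'a set \<Rightarrow> 'a set \<Rightarrow> ('a \<Rightarrow> 'a \<Rightarrow> 'k::field) \<Rightarrow> bool" where
  "quasi_elementary A B d \<longleftrightarrow> elementary_on B d \<and> elementary_on (A - B) d \<and>
     (\<forall>x\<in>Xset A B d. \<forall>p\<in>Pset B d. d x p \<noteq> 0 \<longrightarrow>
         d x p = 1 \<and> (\<forall>p'\<in>Pset B d. p' \<noteq> p \<longrightarrow> d x p' = 0)) \<and>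
     (\<forall>p\<in>Pset B d. \<forall>x1\<in>Xset A B d. \<forall>x2\<in>Xset A B d. d x1 p \<noteq> 0 \<longrightarrow> d x2 p \<noteq> 0 \<longrightarrow> x1 = x2)"

text \<open>Boundary homologically essential elements, in the characterisation valid for
  quasi-elementary differentials, and the map h_+.\<close>
definition Hset where "Hset A B d = {p\<in>Pset B d. \<exists>x\<in>Xset A B d. d x p \<noteq> 0}"
definition h_plus where "h_plus A B d b = (THE x. x \<in> Xset A B d \<and> d x b \<noteq> 0)"

end

theory Submission
  imports Defs
begin

lemma elem_img:
  assumes "elementary_on S d" "x \<in> S" "y \<in> S" "d x y \<noteq> 0"
  shows "img_in S d x = y \<and> d x y = 1 \<and> (\<forall>y'\<in>S. y' \<noteq> y \<longrightarrow> d x y' = 0)"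
proof -
  from assms obtain z where z: "z \<in> S" "d x z = 1" "\<forall>y'\<in>S. y' \<noteq> z \<longrightarrow> d x y' = 0"
    unfolding elementary_on_def by blast
  with assms have "z = y" by force
  with z have "img_in S d x = y" unfolding img_in_def
    by (intro the_equality) auto
  with z \<open>z = y\<close> show ?thesis by blast
qed

lemma elem_inj:
  assumes "elementary_on S d" "x1 \<in> S" "x2 \<in> S" "y \<in> S" "d x1 y \<noteq> 0" "x2 \<noteq> x1"
  shows "d x2 y = 0"
  using assms unfolding elementary_on_def by blast

lemma sum_two:
  assumes "finite A" "u \<in> A" "v \<in> A" "u \<noteq> v" "\<And>y. y \<in> A \<Longrightarrow> y \<noteq> u \<Longrightarrow> y \<noteq> v \<Longrightarrow> f y = 0"
  shows "sum f A = f u + (f v :: 'k::field)"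
proof -
  have "sum f A = sum f {u,v}"
  proof (rule sum.mono_neutral_right)
    show "finite A" by fact
    show "{u, v} \<subseteq> A" using assms by auto
    show "\<forall>i\<in>A - {u, v}. f i = 0" using assms(5) by blast
  qed
  then show ?thesis using assms by simp
qed

lemma img_props:
  assumes "elementary_on S d" "x \<in> src_set S d"
  shows "img_in S d x \<in> S \<and> d x (img_in S d x) = 1 \<and>
    (\<forall>y'\<in>S. y' \<noteq> img_in S d x \<longrightarrow> d x y' = 0)"
proof -
  from assms(2) obtain y where "x \<in> S" "y \<in> S" "d x y \<noteq> 0" unfolding src_set_def by auto
  from elem_img[OF assms(1) this] \<open>y \<in> S\<close> show ?thesis by auto
qed

theorem lemma4p2:
  fixes A B C :: "'a::linorder set" and deg :: "'a \<Rightarrow> int" and d :: "'a \<Rightarrow> 'a \<Rightarrow> 'k::field"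
    and a b :: 'a
  assumes "finite A"
    and "D_ABC A B C deg d"
    and "quasi_elementary A B d"
    and "a \<in> A - B" and "b \<in> B" and "b < a"
    and "C_pair A C b a
         \<or> (b \<in> Hset A B d \<and> a = h_plus A B d b)
         \<or> (a \<in> Yset A B d \<and> b \<in> Qset B d \<and>
              C_pair A C (img_in B d b) (img_in (A - B) d a))
         \<or> (a \<in> Zset A B d \<and> b \<in> Rset B d \<and>
              (\<exists>q\<in>Qset B d. \<exists>y\<in>Yset A B d. img_in B d q = b \<and> img_in (A - B) d y = a
                   \<and> C_pair A C q y))"
  shows "d a b \<noteq> 0"
proof -
  have CB: "C \<subseteq> B" and mab: "MAB_differential A B deg d" and triv: "\<forall>c\<in>C. d_trivial A B d c"
    using assms(2) unfolding D_ABC_def by auto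
  have BA: "B \<subseteq> A" and md: "M_differential A deg d" using mab unfolding MAB_differential_def by auto
  have sq: "\<And>x z. x \<in> A \<Longrightarrow> z \<in> A \<Longrightarrow> (\<Sum>y\<in>A. d x y * d y z) = 0"
    using md unfolding M_differential_def by auto
  have supp: "\<And>x y. d x y \<noteq> 0 \<Longrightarrow> x \<in> A \<and> y \<in> A"
    using md unfolding M_differential_def by auto
  have eB: "elementary_on B d" and eAB: "elementary_on (A - B) d"
    and qe4: "\<forall>p\<in>Pset B d. \<forall>x1\<in>Xset A B d. \<forall>x2\<in>Xset A B d. d x1 p \<noteq> 0 \<longrightarrow> d x2 p \<noteq> 0 \<longrightarrow> x1 = x2"
    using assms(3) unfolding quasi_elementary_def by auto
  consider (c1) "C_pair A C b a" | (c2) "b \<in> Hset A B d \<and> a = h_plus A B d b"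
    | (c3) "a \<in> Yset A B d \<and> b \<in> Qset B d \<and> C_pair A C (img_in B d b) (img_in (A - B) d a)"
    | (c4) "a \<in> Zset A B d \<and> b \<in> Rset B d \<and>
              (\<exists>q\<in>Qset B d. \<exists>y\<in>Yset A B d. img_in B d q = b \<and> img_in (A - B) d y = a
                   \<and> C_pair A C q y)"
    using assms(7) by blast
  then show ?thesis
  proof cases
    case c1
    then have "b \<in> C" "a = succ_in A b" unfolding C_pair_def by auto
    then show ?thesis using triv unfolding d_trivial_def by blast
  next
    case c2
    then obtain x where x: "x \<in> Xset A B d" "d x b \<noteq> 0" and bP: "b \<in> Pset B d"
      unfolding Hset_def by auto
    have "h_plus A B d b = x" unfolding h_plus_def
    proof (rule the_equality)
      show "x \<in> Xset A B d \<and> d x b \<noteq> 0" using x by blast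
      fix x' assume "x' \<in> Xset A B d \<and> d x' b \<noteq> 0"
      then show "x' = x" using qe4 bP x by blast
    qed
    then show ?thesis using c2 x by simp
  next
    case c3
    define c where "c = img_in B d b"
    define y' where "y' = img_in (A - B) d a"
    have ib: "c \<in> B" "d b c = 1" "\<forall>y\<in>B. y \<noteq> c \<longrightarrow> d b y = 0"
      using img_props[OF eB] c3 unfolding Qset_def c_def by auto
    have ia: "y' \<in> A - B" "d a y' = 1" "\<forall>y\<in>A - B. y \<noteq> y' \<longrightarrow> d a y = 0"
      using img_props[OF eAB] c3 unfolding Yset_def y'_def by auto
    have "c \<in> C" "y' = succ_in A c" using c3 unfolding C_pair_def c_def y'_def by auto
    then have yc: "d y' c \<noteq> 0" using triv unfolding d_trivial_def by auto
    have "(\<Sum>y\<in>A. d a y * d y c) = 0" using sq[of a c] assms(4) ib(1) BA by blast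
    moreover have "(\<Sum>y\<in>A. d a y * d y c) = d a b * d b c + d a y' * d y' c"
    proof (rule sum_two)
      show "finite A" by fact
      show "b \<in> A" using assms(5) BA by auto
      show "y' \<in> A" using ia by auto
      show "b \<noteq> y'" using ia assms(5) by auto
      fix y assume y: "y \<in> A" "y \<noteq> b" "y \<noteq> y'"
      show "d a y * d y c = 0"
      proof (cases "y \<in> B")
        case True
        have "d y c = 0" using elem_inj[OF eB, of b y c] ib True y assms(5) by auto
        then show ?thesis by simp
      next
        case False
        then show ?thesis using ia y by auto
      qed
    qed
    ultimately have "d a b + d y' c = 0" using ib ia by simp
    then show ?thesis using yc by auto
  next
    case c4
    then obtain q y where q: "q \<in> Qset B d" "y \<in> Yset A B d" "img_in B d q = b"
      "img_in (A - B) d y = a" "C_pair A C q y" by blast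
    have iq: "b \<in> B" "d q b = 1" and qB: "q \<in> B"
      using img_props[OF eB, of q] q unfolding Qset_def src_set_def by auto
    have iy: "a \<in> A - B" "d y a = 1" "\<forall>x\<in>A - B. x \<noteq> a \<longrightarrow> d y x = 0" and yAB: "y \<in> A - B"
      using img_props[OF eAB, of y] q unfolding Yset_def src_set_def by auto
    have "q \<in> C" "y = succ_in A q" using q unfolding C_pair_def by auto
    then have yq: "d y q \<noteq> 0" using triv unfolding d_trivial_def by auto
    have "(\<Sum>x\<in>A. d y x * d x b) = 0" using sq[of y b] yAB assms(5) BA by blast
    moreover have "(\<Sum>x\<in>A. d y x * d x b) = d y q * d q b + d y a * d a b"
    proof (rule sum_two)
      show "finite A" by fact
      show "q \<in> A" using qB BA by auto
      show "a \<in> A" using assms(4) by auto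
      show "q \<noteq> a" using qB assms(4) by auto
      fix x assume x: "x \<in> A" "x \<noteq> q" "x \<noteq> a"
      show "d y x * d x b = 0"
      proof (cases "x \<in> B")
        case True
        have "d x b = 0" using elem_inj[OF eB, of q x b] iq qB True x by auto
        then show ?thesis by simp
      next
        case False
        then show ?thesis using iy x by auto
      qed
    qed
    ultimately have "d y q + d a b = 0" using iq iy by simp
    then show ?thesis using yq by auto
  qed
qed

end
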